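(* Let $(U,\mathrm{dist})$ be a metric space, $\gamma>0$, $\eta>0$, $\Lambda\in\mathbb{R}_{>0}\cup\{\infty\}$, $\nu>1$. Let $f:U\to\mathbb{R}$ and let $B(\cdot)$ be a $g_E$-smooth upper bound on $\mathrm{L}_{f,\Lambda}$, where $g_E(x,x')=e^{\gamma\,\mathrm{dist}(x,x')}$. Then the mechanism $M$ which on input $x$ releases $M(x)=f(x)+\frac{B(x)}{\eta}Z$ with $Z\sim\mathcal{T}_\nu(0,1)$ is $(\varepsilon,0,\Lambda)$-GP, where $\varepsilon=\nu\gamma+\frac{\nu+1}{2\sqrt{\nu}}\eta$.
   Context: $\mathrm{L}_{f,\Lambda}(x)$ is the infimum of all $K$ such that $|f(x)-f(x')|\le K\,\mathrm{dist}(x,x')$ for all $x'\in U$ with $\mathrm{dist}(x,x')\le\Lambda$. A $g$-smooth upper bound on $\mathrm{L}_{f,\Lambda}$ is $B:U\to\mathbb{R}_{\ge0}$ with (1) $B(x)\ge\mathrm{L}_{f,\Lambda}(x)$ for all $x$ and (2) $B(x)\le g(x,x')B(x')$ for all $x,x'\in U$. $\mathcal{T}_\nu(0,1)$ is Student's $t$-distribution with $\nu$ degrees of freedom, density $\frac{c_\nu}{\sqrt\nu}(1+y^2/\nu)^{-(\nu+1)/2}$, $c_\nu=\frac{\Gamma((\nu+1)/2)}{\sqrt\pi\,\Gamma(\nu/2)}$. A mechanism $M$ with outputs in $\mathbb{R}$ is $(\varepsilon,\delta,\Lambda)$-GP if for every measurable $S\subseteq\mathbb{R}$ and all $x,x'$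 with $\mathrm{dist}(x,x')\le\Lambda$: $\Pr[M(x)\in S]\le e^{\varepsilon\,\mathrm{dist}(x,x')}\Pr[M(x')\in S]+\delta$. *)

theory Defs
  imports "HOL-Probability.Probability"
begin

text \<open>Local Lipschitz constant L_{f,Lambda}(x) on the domain U (as an extended real;
  the infimum of the empty set is +infinity).\<close>
definition local_lip :: "'a::metric_space set \<Rightarrow> ('a \<Rightarrow> real) \<Rightarrow> ereal \<Rightarrow> 'a \<Rightarrow> ereal" where
  "local_lip U f Lam x = Inf {ereal K | K. \<forall>x'\<in>U. ereal (dist x x') \<le> Lam \<longrightarrow>
                                      \<bar>f x - f x'\<bar> \<le> K * dist x x'}"

definition smooth_upper_bound ::
  "'a::metric_space set \<Rightarrow> ('a \<Rightarrow> 'a \<Rightarrow> real) \<Rightarrow> ('a \<Rightarrow> real) \<Rightarrow> ereal \<Rightarrow> ('a \<Rightarrow> real) \<Rightarrow> bool" where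
  "smooth_upper_bound U g f Lam B \<longleftrightarrow>
     (\<forall>x\<in>U. B x \<ge> 0) \<and>
     (\<forall>x\<in>U. ereal (B x) \<ge> local_lip U f Lam x) \<and>
     (\<forall>x\<in>U. \<forall>x'\<in>U. B x \<le> g x x' * B x')"

definition student_t_const :: "real \<Rightarrow> real" where
  "student_t_const \<nu> = Gamma ((\<nu> + 1) / 2) / (sqrt pi * Gamma (\<nu> / 2))"

definition student_t_density :: "real \<Rightarrow> real \<Rightarrow> real" where
  "student_t_density \<nu> y =
     student_t_const \<nu> / sqrt \<nu> * (1 + y\<^sup>2 / \<nu>) powr (-(\<nu> + 1) / 2)"

definition student_t :: "real \<Rightarrow> real measure" where
  "student_t \<nu> = density lborel (\<lambda>y. ennreal (student_t_density \<nu> y))"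

definition GP :: "'a::metric_space set \<Rightarrow> ('a \<Rightarrow> real measure) \<Rightarrow> real \<Rightarrow> real \<Rightarrow> ereal \<Rightarrow> bool" where
  "GP U M \<epsilon> \<delta> Lam \<longleftrightarrow>
     (\<forall>S \<in> sets borel. \<forall>x\<in>U. \<forall>x'\<in>U. ereal (dist x x') \<le> Lam \<longrightarrow>
        measure (M x) S \<le> exp (\<epsilon> * dist x x') * measure (M x') S + \<delta>)"

definition t_mechanism :: "('a \<Rightarrow> real) \<Rightarrow> ('a \<Rightarrow> real) \<Rightarrow> real \<Rightarrow> real \<Rightarrow> 'a \<Rightarrow> real measure" where
  "t_mechanism f B \<eta> \<nu> x = distr (student_t \<nu>) borel (\<lambda>z. f x + B x / \<eta> * z)"

end

theory Submission
  imports Defs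
begin



lemma dbound:
  fixes \<nu> z :: real assumes "\<nu> > 0"
  shows "\<bar>(2*z/\<nu>)/(1+z\<^sup>2/\<nu>)\<bar> \<le> 1 / sqrt \<nu>"
proof -
  define s where "s = sqrt \<nu>"
  have s: "s > 0" "\<nu> = s * s" using assms by (auto simp: s_def)
  have "0 \<le> (s - abs z) * (s - abs z)" by simp
  hence h: "2 * abs z * s \<le> s * s + z * z" by (simp add: algebra_simps)
  have pos: "1 + z\<^sup>2/\<nu> > 0" using assms by (simp add: add_pos_nonneg)
  have e: "1 + z\<^sup>2/\<nu> = (s * s + z * z) / (s * s)" using s by (simp add: field_simps power2_eq_square)
  have "\<bar>(2*z/\<nu>)/(1+z\<^sup>2/\<nu>)\<bar> = (2 * abs z / (s * s)) / ((s * s + z * z) / (s * s))"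
    using pos e s by (simp add: abs_mult abs_divide)
  also have "\<dots> = 2 * abs z / (s * s + z * z)" using s by simp
  also have "\<dots> \<le> 1 / s"
    using h s pos e by (simp add: divide_simps mult.commute)
  finally show ?thesis by (simp add: s_def)
qed

lemma ln_lip:
  fixes \<nu> p q :: real assumes "\<nu> > 0" "p < q"
  shows "\<bar>ln (1+q\<^sup>2/\<nu>) - ln (1+p\<^sup>2/\<nu>)\<bar> \<le> (q - p) / sqrt \<nu>"
proof -
  have pos: "\<And>x::real. 1 + x\<^sup>2/\<nu> > 0" using assms by (simp add: add_pos_nonneg)
  have d: "\<And>x. DERIV (\<lambda>x. ln (1+x\<^sup>2/\<nu>)) x :> (2*x/\<nu>)/(1+x\<^sup>2/\<nu>)"
    using pos by (auto intro!: derivative_eq_intros simp: field_simps)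
  obtain z where "ln (1+q\<^sup>2/\<nu>) - ln (1+p\<^sup>2/\<nu>) = (q - p) * ((2*z/\<nu>)/(1+z\<^sup>2/\<nu>))"
    using MVT2[OF assms(2), of "\<lambda>x. ln (1+x\<^sup>2/\<nu>)" "\<lambda>x. (2*x/\<nu>)/(1+x\<^sup>2/\<nu>)"] d by blast
  hence "\<bar>ln (1+q\<^sup>2/\<nu>) - ln (1+p\<^sup>2/\<nu>)\<bar> = (q-p) * \<bar>(2*z/\<nu>)/(1+z\<^sup>2/\<nu>)\<bar>"
    using assms by (simp add: abs_mult)
  also have "\<dots> \<le> (q-p) * (1 / sqrt \<nu>)"
    using dbound[OF assms(1)] assms by (intro mult_left_mono) auto
  finally show ?thesis by simp
qed

lemma phi_lip:
  fixes \<nu> u v :: real assumes "\<nu> > 0"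
  shows "1 + v\<^sup>2/\<nu> \<le> exp (\<bar>u - v\<bar> / sqrt \<nu>) * (1 + u\<^sup>2/\<nu>)"
proof -
  have pos: "\<And>x::real. 1 + x\<^sup>2/\<nu> > 0" using assms by (simp add: add_pos_nonneg)
  have "\<bar>ln (1+v\<^sup>2/\<nu>) - ln (1+u\<^sup>2/\<nu>)\<bar> \<le> \<bar>u - v\<bar> / sqrt \<nu>"
  proof (cases u v rule: linorder_cases)
    case less then show ?thesis using ln_lip[OF assms less] by simp
  next
    case greater then show ?thesis using ln_lip[OF assms greater] by simp
  qed simp
  hence "ln (1+v\<^sup>2/\<nu>) \<le> \<bar>u - v\<bar> / sqrt \<nu> + ln (1+u\<^sup>2/\<nu>)" by linarith
  hence "exp (ln (1+v\<^sup>2/\<nu>)) \<le> exp (\<bar>u - v\<bar> / sqrt \<nu> + ln (1+u\<^sup>2/\<nu>))" by simp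
  thus ?thesis using pos by (simp add: exp_add)
qed




lemma scale_part:
  fixes \<nu> b b' E0 :: real
  assumes "\<nu> \<ge> 1" "b > 0" "b' > 0" "b \<le> E0 * b'" "b' \<le> E0 * b" "E0 \<ge> 1"
  shows "b' * max 1 ((b/b')\<^sup>2) powr ((\<nu>+1)/2) \<le> E0 powr \<nu> * b"
proof (cases "b \<le> b'")
  case True
  hence "(b/b')\<^sup>2 \<le> 1" using assms by (simp add: power_le_one)
  hence mx: "max 1 ((b/b')\<^sup>2) = 1" by simp
  have "E0 \<le> E0 powr \<nu>"
    using assms powr_mono[of 1 \<nu> E0] by simp
  have "b' * max 1 ((b/b')\<^sup>2) powr ((\<nu>+1)/2) = b' * 1 powr ((\<nu>+1)/2)" by (simp only: mx)
  hence "b' * max 1 ((b/b')\<^sup>2) powr ((\<nu>+1)/2) = b'" by simp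
  also have "\<dots> \<le> E0 * b" by fact
  also have "\<dots> \<le> E0 powr \<nu> * b" using \<open>E0 \<le> E0 powr \<nu>\<close> assms by (intro mult_right_mono) auto
  finally show ?thesis .
next
  case False
  hence r: "b/b' \<ge> 1" using assms by simp
  hence "(b/b')\<^sup>2 \<ge> 1" by (simp add: one_le_power)
  hence "max 1 ((b/b')\<^sup>2) powr ((\<nu>+1)/2) = ((b/b') powr 2) powr ((\<nu>+1)/2)"
    using assms by (simp add: powr_realpow)
  also have "\<dots> = (b/b') powr (\<nu>+1)" proof - have e2: "(2::real) * ((\<nu>+1)/2) = \<nu>+1" by simp show ?thesis by (simp only: powr_powr e2) qed
  also have "\<dots> = (b/b') powr \<nu> * (b/b')" using r assms by (simp add: powr_add)
  finally have "b' * max 1 ((b/b')\<^sup>2) powr ((\<nu>+1)/2) = (b/b') powr \<nu> * b" using assms by simp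
  also have "\<dots> \<le> E0 powr \<nu> * b"
    using assms r by (intro mult_right_mono powr_mono2) (auto simp: field_simps)
  finally show ?thesis .
qed

lemma pointwise:
  fixes \<nu> \<gamma> \<eta> d a a' b b' y :: real
  assumes nu: "\<nu> > 1" and "\<gamma> \<ge> 0" "\<eta> > 0" "d \<ge> 0" "b > 0" "b' > 0"
    and "b \<le> exp (\<gamma>*d) * b'" "b' \<le> exp (\<gamma>*d) * b" and sh: "\<bar>a - a'\<bar> \<le> \<eta>*d*b"
  shows "(1 + ((y-a)/b)\<^sup>2/\<nu>) powr (-(\<nu>+1)/2) / b
     \<le> exp ((\<nu>*\<gamma> + (\<nu>+1)/(2* sqrt \<nu>)*\<eta>) * d) * ((1 + ((y-a')/b')\<^sup>2/\<nu>) powr (-(\<nu>+1)/2) / b')"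
proof -
  define k where "k = (\<nu>+1)/2"
  define P where "P = 1 + ((y-a)/b)\<^sup>2/\<nu>"
  define Q where "Q = 1 + ((y-a')/b')\<^sup>2/\<nu>"
  define R where "R = 1 + ((y-a')/b)\<^sup>2/\<nu>"
  define m where "m = max 1 ((b/b')\<^sup>2)"
  define X where "X = exp (\<eta>*d / sqrt \<nu>)"
  have k: "k > 0" using nu by (simp add: k_def)
  have posx: "\<And>x::real. 1 + x\<^sup>2/\<nu> > 0" using nu by (simp add: add_pos_nonneg)
  hence P: "P > 0" and Q: "Q > 0" and R: "R > 0" by (auto simp: P_def Q_def R_def)
  have m1: "m \<ge> 1" by (simp add: m_def)
  have QR: "Q \<le> m * R"
  proof -
    have "((y-a')/b')\<^sup>2 = (b/b')\<^sup>2 * ((y-a')/b)\<^sup>2" using assms by (simp add: field_simps)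
    also have "\<dots> \<le> m * ((y-a')/b)\<^sup>2" by (intro mult_right_mono) (auto simp: m_def)
    finally have "((y-a')/b')\<^sup>2/\<nu> \<le> m * ((y-a')/b)\<^sup>2/\<nu>" using nu by (simp add: divide_right_mono)
    moreover have "m * R = m + m * ((y-a')/b)\<^sup>2/\<nu>" by (simp add: R_def algebra_simps)
    ultimately show ?thesis using m1 unfolding Q_def by linarith
  qed
  have RP: "R \<le> X * P"
  proof -
    have "R \<le> exp (\<bar>(y-a)/b - (y-a')/b\<bar> / sqrt \<nu>) * P"
      unfolding R_def P_def by (rule phi_lip) (use nu in simp)
    also have "\<bar>(y-a)/b - (y-a')/b\<bar> = \<bar>a - a'\<bar> / b" using assms
      by (simp add: diff_divide_distrib[symmetric] abs_divide)
    also have "\<dots> \<le> \<eta>*d" using sh assms by (simp add: divide_simps)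
    finally show ?thesis unfolding X_def using P nu
      by (smt (verit) divide_right_mono exp_le_cancel_iff mult_right_mono real_sqrt_gt_0_iff)
  qed
  have Qk: "Q powr k \<le> m powr k * X powr k * P powr k"
  proof -
    have "m * R \<le> m * (X * P)" using RP m1 by (intro mult_left_mono) auto
    hence "Q \<le> m * X * P" using QR by (simp add: mult.assoc)
    hence "Q powr k \<le> (m * X * P) powr k"
      using Q k by (intro powr_mono2) auto
    also have "\<dots> = m powr k * X powr k * P powr k"
      using m1 P by (simp add: powr_mult X_def)
    finally show ?thesis .
  qed
  have sc: "b' * m powr k \<le> exp (\<gamma>*d) powr \<nu> * b"
    unfolding m_def k_def by (rule scale_part) (use assms in auto)
  have Xk: "X powr k = exp (k * (\<eta>*d / sqrt \<nu>))" by (simp add: X_def powr_def)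
  have E: "exp ((\<nu>*\<gamma> + (\<nu>+1)/(2* sqrt \<nu>)*\<eta>) * d) = exp (\<gamma>*d) powr \<nu> * X powr k"
    unfolding Xk by (simp add: powr_def k_def exp_add[symmetric] field_simps)
  have main: "b' * Q powr k \<le> exp (\<gamma>*d) powr \<nu> * X powr k * b * P powr k"
  proof -
    have "b' * Q powr k \<le> b' * (m powr k * X powr k * P powr k)"
      using Qk assms by (intro mult_left_mono) auto
    also have "\<dots> = (b' * m powr k) * (X powr k * P powr k)" by simp
    also have "\<dots> \<le> (exp (\<gamma>*d) powr \<nu> * b) * (X powr k * P powr k)"
      using sc by (intro mult_right_mono) auto
    finally show ?thesis by (simp add: ac_simps)
  qed
  have ex: "-(\<nu>+1)/2 = - k" unfolding k_def by (rule minus_divide_left[symmetric])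
  have "P powr (- k) / b = inverse (P powr k) / b" by (simp add: powr_minus)
  also have "\<dots> \<le> exp (\<gamma>*d) powr \<nu> * X powr k * (inverse (Q powr k) / b')"
    using main P Q assms by (simp add: divide_simps mult_ac)
  finally show ?thesis unfolding ex E P_def[symmetric] Q_def[symmetric] by (simp add: powr_minus)
qed




lemma t_dens_nonneg: "\<nu> > 0 \<Longrightarrow> student_t_density \<nu> y \<ge> 0"
  unfolding student_t_density_def student_t_const_def
  by (intro mult_nonneg_nonneg divide_nonneg_nonneg) (auto intro: less_imp_le Gamma_real_pos)

lemma t_const_nonneg: "\<nu> > 0 \<Longrightarrow> student_t_const \<nu> \<ge> 0"
  unfolding student_t_const_def
  by (intro divide_nonneg_nonneg mult_nonneg_nonneg) (auto intro: less_imp_le Gamma_real_pos)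

lemma t_dens_meas[measurable]: "student_t_density \<nu> \<in> borel_measurable borel"
  unfolding student_t_density_def by measurable

lemma t_dens_bound:
  assumes "\<nu> \<ge> 1"
  shows "student_t_density \<nu> y \<le> (student_t_const \<nu> * sqrt \<nu>) * (1 / (1 + y\<^sup>2))"
proof -
  have c: "student_t_const \<nu> \<ge> 0" unfolding student_t_const_def using assms
    by (intro divide_nonneg_nonneg mult_nonneg_nonneg) (auto intro: less_imp_le Gamma_real_pos)
  have p1: "1 + y\<^sup>2/\<nu> \<ge> 1" using assms by simp
  have "(1 + y\<^sup>2/\<nu>) powr (-(\<nu>+1)/2) \<le> (1 + y\<^sup>2/\<nu>) powr (-1)"
    using assms p1 by (intro powr_mono) (auto simp: field_simps)
  also have "\<dots> = \<nu> / (\<nu> + y\<^sup>2)" using assms p1 by (simp add: powr_minus field_simps)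
  also have "\<dots> \<le> \<nu> / (1 + y\<^sup>2)" using assms
    by (intro divide_left_mono) (auto simp: add_pos_nonneg)
  finally have "student_t_density \<nu> y \<le> student_t_const \<nu> / sqrt \<nu> * (\<nu> / (1 + y\<^sup>2))"
    unfolding student_t_density_def using c assms by (intro mult_left_mono) auto
  also have "\<dots> = (student_t_const \<nu> * sqrt \<nu>) * (1 / (1 + y\<^sup>2))"
  proof -
    have "\<nu> / sqrt \<nu> = sqrt \<nu>" using assms by (simp add: real_div_sqrt)
    have "student_t_const \<nu> / sqrt \<nu> * (\<nu> / (1 + y\<^sup>2)) = student_t_const \<nu> * (\<nu> / sqrt \<nu>) * (1 / (1 + y\<^sup>2))"
      by simp
    thus ?thesis using \<open>\<nu> / sqrt \<nu> = sqrt \<nu>\<close> by simp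
  qed
  finally show ?thesis .
qed

lemma cauchy_finite: "(\<integral>\<^sup>+y. ennreal (1 / (1 + y\<^sup>2)) \<partial>lborel) < \<infinity>"
proof -
  define h where "h = (\<lambda>y::real. ennreal (1 / (1 + y\<^sup>2)) * indicator {0..} y)"
  have hm[measurable]: "h \<in> borel_measurable borel" unfolding h_def by measurable
  have "(\<integral>\<^sup>+y. h y \<partial>lborel) = ennreal (pi/2 - arctan 0)"
    unfolding h_def
  proof (rule nn_integral_FTC_atLeast)
    show "(arctan \<longlongrightarrow> pi/2) at_top" by (rule tendsto_arctan_at_top)
  qed (auto intro!: derivative_eq_intros simp: add_nonneg_eq_0_iff field_simps power2_eq_square add_pos_nonneg)
  hence hf: "(\<integral>\<^sup>+y. h y \<partial>lborel) < \<infinity>" by simp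
  have "(\<integral>\<^sup>+y. h y \<partial>lborel) = ennreal \<bar>-1\<bar> * (\<integral>\<^sup>+y. h (0 + (-1) * y) \<partial>lborel)"
    by (rule nn_integral_real_affine) auto
  hence hf2: "(\<integral>\<^sup>+y. h (-y) \<partial>lborel) < \<infinity>" using hf by simp
  have "(\<integral>\<^sup>+y. ennreal (1 / (1 + y\<^sup>2)) \<partial>lborel) \<le> (\<integral>\<^sup>+y. h y + h (-y) \<partial>lborel)"
    by (intro nn_integral_mono) (auto simp: h_def indicator_def)
  also have "\<dots> = (\<integral>\<^sup>+y. h y \<partial>lborel) + (\<integral>\<^sup>+y. h (-y) \<partial>lborel)"
    by (rule nn_integral_add) auto
  also have "\<dots> < \<infinity>" using hf hf2 by (simp add: ennreal_add_less_top)
  finally show ?thesis .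
qed

lemma student_t_finite:
  assumes "\<nu> \<ge> 1" shows "emeasure (student_t \<nu>) UNIV < \<infinity>"
proof -
  have "emeasure (student_t \<nu>) UNIV = (\<integral>\<^sup>+y. ennreal (student_t_density \<nu> y) \<partial>lborel)"
    unfolding student_t_def by (subst emeasure_density) auto
  also have "\<dots> \<le> (\<integral>\<^sup>+y. ennreal (student_t_const \<nu> * sqrt \<nu>) * ennreal (1 / (1 + y\<^sup>2)) \<partial>lborel)"
  proof (intro nn_integral_mono)
    fix y
    have "student_t_const \<nu> * sqrt \<nu> \<ge> 0" using t_const_nonneg[of \<nu>] assms by simp
    hence "ennreal (student_t_const \<nu> * sqrt \<nu>) * ennreal (1 / (1 + y\<^sup>2))
        = ennreal (student_t_const \<nu> * sqrt \<nu> * (1 / (1 + y\<^sup>2)))"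
      by (intro ennreal_mult[symmetric]) auto
    thus "ennreal (student_t_density \<nu> y) \<le> ennreal (student_t_const \<nu> * sqrt \<nu>) * ennreal (1 / (1 + y\<^sup>2))"
      using t_dens_bound[OF assms, of y] by (simp add: ennreal_leI)
  qed
  also have "\<dots> = ennreal (student_t_const \<nu> * sqrt \<nu>) * (\<integral>\<^sup>+y. ennreal (1 / (1 + y\<^sup>2)) \<partial>lborel)"
    by (rule nn_integral_cmult) measurable
  also have "\<dots> < \<infinity>" using cauchy_finite by (simp add: ennreal_mult_less_top)
  finally show ?thesis .
qed

lemma emeasure_mech:
  assumes b: "b > 0" and S: "S \<in> sets borel" and nu: "\<nu> > 0"
  shows "emeasure (distr (student_t \<nu>) borel (\<lambda>z. a + b * z)) S
       = (\<integral>\<^sup>+y. ennreal (student_t_density \<nu> ((y - a)/b) / b) * indicator S y \<partial>lborel)"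
proof -
  have [measurable]: "S \<in> sets borel" by fact
  have pre: "(\<lambda>z. a + b * z) -` S \<in> sets borel"
    using measurable_sets[of "\<lambda>z. a + b * z" borel borel S] S by auto
  have "emeasure (distr (student_t \<nu>) borel (\<lambda>z. a + b * z)) S
      = emeasure (student_t \<nu>) ((\<lambda>z. a + b * z) -` S \<inter> space (student_t \<nu>))"
    by (rule emeasure_distr) (auto simp: student_t_def)
  also have "\<dots> = (\<integral>\<^sup>+z. ennreal (student_t_density \<nu> z) * indicator ((\<lambda>z. a + b * z) -` S) z \<partial>lborel)"
    unfolding student_t_def by (subst emeasure_density) (auto simp: pre)
  also have "\<dots> = ennreal \<bar>b\<bar> * (\<integral>\<^sup>+z. ennreal (student_t_density \<nu> ((a + b * z - a)/b) / b) * indicator S (a + b * z) \<partial>lborel)"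
    using b by (subst nn_integral_cmult[symmetric])
      (auto intro!: nn_integral_cong simp: ennreal_mult'[symmetric] indicator_def)
  also have "\<dots> = (\<integral>\<^sup>+y. ennreal (student_t_density \<nu> ((y - a)/b) / b) * indicator S y \<partial>lborel)"
    by (rule nn_integral_real_affine[symmetric]) (use b in auto)
  finally show ?thesis .
qed




lemma t_mech_emeasure_bound:
  fixes \<nu> \<gamma> \<eta> d a a' b b' E :: real
  assumes nu: "\<nu> > 1" and g: "\<gamma> \<ge> 0" and eta: "\<eta> > 0" and d: "d \<ge> 0" and b: "b > 0" and b': "b' > 0"
    and bb: "b \<le> exp (\<gamma>*d) * b'" and bb': "b' \<le> exp (\<gamma>*d) * b" and sh: "\<bar>a - a'\<bar> \<le> \<eta>*d*b"
    and S: "S \<in> sets borel"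
    and E: "E = exp ((\<nu>*\<gamma> + (\<nu>+1)/(2 * sqrt \<nu>)*\<eta>) * d)"
  shows "measure (distr (student_t \<nu>) borel (\<lambda>z. a + b * z)) S
     \<le> E * measure (distr (student_t \<nu>) borel (\<lambda>z. a' + b' * z)) S"
proof -
  have nu0: "\<nu> > 0" using nu by simp
  have [measurable]: "S \<in> sets borel" by (rule S)
  have E0: "E \<ge> 0" using E by simp
  have c: "student_t_const \<nu> / sqrt \<nu> \<ge> 0" using t_const_nonneg[OF nu0] nu0 by (intro divide_nonneg_nonneg) auto
  have pw: "student_t_density \<nu> ((y - a)/b) / b \<le> E * (student_t_density \<nu> ((y - a')/b') / b')" for y
  proof -
    have "(1 + ((y-a)/b)\<^sup>2/\<nu>) powr (-(\<nu>+1)/2) / b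
       \<le> E * ((1 + ((y-a')/b')\<^sup>2/\<nu>) powr (-(\<nu>+1)/2) / b')"
      unfolding E by (rule pointwise) (use assms in auto)
    hence "student_t_const \<nu> / sqrt \<nu> * ((1 + ((y-a)/b)\<^sup>2/\<nu>) powr (-(\<nu>+1)/2) / b)
       \<le> student_t_const \<nu> / sqrt \<nu> * (E * ((1 + ((y-a')/b')\<^sup>2/\<nu>) powr (-(\<nu>+1)/2) / b'))"
      using c by (rule mult_left_mono)
    thus ?thesis unfolding student_t_density_def by (simp add: ac_simps)
  qed
  have "emeasure (distr (student_t \<nu>) borel (\<lambda>z. a + b * z)) S
      = (\<integral>\<^sup>+y. ennreal (student_t_density \<nu> ((y - a)/b) / b) * indicator S y \<partial>lborel)"
    by (rule emeasure_mech[OF b S nu0])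
  also have "\<dots> \<le> (\<integral>\<^sup>+y. ennreal E * (ennreal (student_t_density \<nu> ((y - a')/b') / b') * indicator S y) \<partial>lborel)"
  proof (intro nn_integral_mono)
    fix y
    have "ennreal (student_t_density \<nu> ((y - a)/b) / b) \<le> ennreal (E * (student_t_density \<nu> ((y - a')/b') / b'))"
      using pw by (rule ennreal_leI)
    also have "\<dots> = ennreal E * ennreal (student_t_density \<nu> ((y - a')/b') / b')"
      using E0 by (rule ennreal_mult')
    finally show "ennreal (student_t_density \<nu> ((y - a)/b) / b) * indicator S y
      \<le> ennreal E * (ennreal (student_t_density \<nu> ((y - a')/b') / b') * indicator S y)"
      by (auto simp: indicator_def mult.assoc)
  qed
  also have "\<dots> = ennreal E * (\<integral>\<^sup>+y. ennreal (student_t_density \<nu> ((y - a')/b') / b') * indicator S y \<partial>lborel)"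
    using S by (intro nn_integral_cmult) measurable
  also have "\<dots> = ennreal E * emeasure (distr (student_t \<nu>) borel (\<lambda>z. a' + b' * z)) S"
    by (simp add: emeasure_mech[OF b' S nu0])
  finally have le: "emeasure (distr (student_t \<nu>) borel (\<lambda>z. a + b * z)) S
      \<le> ennreal E * emeasure (distr (student_t \<nu>) borel (\<lambda>z. a' + b' * z)) S" .
  have "emeasure (distr (student_t \<nu>) borel (\<lambda>z. a' + b' * z)) S
      \<le> emeasure (distr (student_t \<nu>) borel (\<lambda>z. a' + b' * z)) UNIV"
    by (rule emeasure_mono) auto
  also have "\<dots> = emeasure (student_t \<nu>) UNIV"
    by (subst emeasure_distr) (auto simp: student_t_def)
  also have "\<dots> < \<infinity>" using student_t_finite nu by simp
  finally have fin: "emeasure (distr (student_t \<nu>) borel (\<lambda>z. a' + b' * z)) S < \<infinity>" .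
  have "measure (distr (student_t \<nu>) borel (\<lambda>z. a + b * z)) S
     \<le> enn2real (ennreal E * emeasure (distr (student_t \<nu>) borel (\<lambda>z. a' + b' * z)) S)"
    unfolding measure_def using le fin by (intro enn2real_mono) (auto simp: ennreal_mult_less_top)
  also have "\<dots> = E * measure (distr (student_t \<nu>) borel (\<lambda>z. a' + b' * z)) S"
    using E0 by (simp add: enn2real_mult measure_def)
  finally show ?thesis .
qed

lemma shift_bound:
  fixes U :: "'a::metric_space set" and f B :: "'a \<Rightarrow> real"
  assumes "ereal (B x) \<ge> local_lip U f Lam x" "x' \<in> U" "ereal (dist x x') \<le> Lam"
  shows "\<bar>f x - f x'\<bar> \<le> B x * dist x x'"
proof (cases "dist x x' = 0")
  case True thus ?thesis by simp
next
  case False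
  hence dp: "dist x x' > 0" by simp
  have "\<bar>f x - f x'\<bar> / dist x x' \<le> K" if K: "B x < K" for K
  proof -
    have "local_lip U f Lam x < ereal K" by (rule order.strict_trans1[OF assms(1)]) (use K in simp)
    then obtain e where e: "e \<in> {ereal K | K. \<forall>x'\<in>U. ereal (dist x x') \<le> Lam \<longrightarrow>
                                      \<bar>f x - f x'\<bar> \<le> K * dist x x'}" "e < ereal K"
      unfolding local_lip_def by (auto simp: Inf_less_iff)
    then obtain K0 where "e = ereal K0" and K0: "\<forall>x'\<in>U. ereal (dist x x') \<le> Lam \<longrightarrow> \<bar>f x - f x'\<bar> \<le> K0 * dist x x'"
      by blast
    with e have "K0 < K" by simp
    have "\<bar>f x - f x'\<bar> \<le> K0 * dist x x'" using K0 assms by blast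
    also have "\<dots> \<le> K * dist x x'" using \<open>K0 < K\<close> dp by simp
    finally show ?thesis using dp by (simp add: divide_simps)
  qed
  hence "\<bar>f x - f x'\<bar> / dist x x' \<le> B x" by (rule dense_ge)
  thus ?thesis using dp by (simp add: divide_simps)
qed

theorem mainTheorem5:
  fixes U :: "'a::metric_space set"
    and f B :: "'a \<Rightarrow> real"
    and \<gamma> \<eta> \<nu> :: real
    and Lam :: ereal
  assumes "\<gamma> > 0" and "\<eta> > 0" and "Lam > 0" and "\<nu> > 1"
    and "smooth_upper_bound U (\<lambda>x x'. exp (\<gamma> * dist x x')) f Lam B"
  shows "GP U (t_mechanism f B \<eta> \<nu>)
            (\<nu> * \<gamma> + (\<nu> + 1) / (2 * sqrt \<nu>) * \<eta>) 0 Lam"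
  unfolding GP_def
proof (intro ballI impI)
  fix S :: "real set" and x x' :: 'a
  assume S: "S \<in> sets borel" and x: "x \<in> U" and x': "x' \<in> U" and dl: "ereal (dist x x') \<le> Lam"
  define d where "d = dist x x'"
  define \<epsilon> where "\<epsilon> = \<nu> * \<gamma> + (\<nu> + 1) / (2 * sqrt \<nu>) * \<eta>"
  have d0: "d \<ge> 0" by (simp add: d_def)
  have Bnn: "\<And>x. x \<in> U \<Longrightarrow> B x \<ge> 0" and lip: "\<And>x. x \<in> U \<Longrightarrow> ereal (B x) \<ge> local_lip U f Lam x"
    and sm: "\<And>x x'. x \<in> U \<Longrightarrow> x' \<in> U \<Longrightarrow> B x \<le> exp (\<gamma> * dist x x') * B x'"
    using assms(5) unfolding smooth_upper_bound_def by auto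
  have sh: "\<bar>f x - f x'\<bar> \<le> B x * d" unfolding d_def by (rule shift_bound[where B=B and f=f, OF lip[OF x] x' dl])
  have eps0: "\<epsilon> \<ge> 0" using assms unfolding \<epsilon>_def by (intro add_nonneg_nonneg mult_nonneg_nonneg) auto
  have smx: "B x \<le> exp (\<gamma> * d) * B x'" using sm[OF x x'] by (simp add: d_def)
  have smx': "B x' \<le> exp (\<gamma> * d) * B x" using sm[OF x' x] by (simp add: d_def dist_commute)
  show "measure (t_mechanism f B \<eta> \<nu> x) S
        \<le> exp ((\<nu> * \<gamma> + (\<nu> + 1) / (2 * sqrt \<nu>) * \<eta>) * dist x x') * measure (t_mechanism f B \<eta> \<nu> x') S + 0"
  proof (cases "B x = 0")
    case True
    hence "B x' = 0" using smx' Bnn[OF x'] by simp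
    moreover have "f x = f x'" using sh True by simp
    ultimately have eq: "t_mechanism f B \<eta> \<nu> x = t_mechanism f B \<eta> \<nu> x'"
      using True by (simp add: t_mechanism_def)
    have "1 \<le> exp (\<epsilon> * d)" using eps0 d0 by simp
    hence "measure (t_mechanism f B \<eta> \<nu> x') S \<le> exp (\<epsilon> * d) * measure (t_mechanism f B \<eta> \<nu> x') S"
      using measure_nonneg[of "t_mechanism f B \<eta> \<nu> x'" S]
      by (metis mult_le_cancel_right1 not_le order_less_le_trans)
    thus ?thesis using eq by (simp add: \<epsilon>_def d_def)
  next
    case False
    hence bp: "B x > 0" using Bnn[OF x] by simp
    have "B x' \<noteq> 0"
    proof
      assume "B x' = 0"
      with smx bp show False by simp
    qed
    hence bp': "B x' > 0" using Bnn[OF x'] by simp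
    have "measure (distr (student_t \<nu>) borel (\<lambda>z. f x + B x / \<eta> * z)) S
       \<le> exp (\<epsilon> * d) * measure (distr (student_t \<nu>) borel (\<lambda>z. f x' + B x' / \<eta> * z)) S"
    proof (rule t_mech_emeasure_bound[OF assms(4) _ assms(2) d0 _ _ _ _ _ S])
      show "exp (\<epsilon> * d) = exp ((\<nu> * \<gamma> + (\<nu> + 1) / (2 * sqrt \<nu>) * \<eta>) * d)" by (simp add: \<epsilon>_def)
      show "B x / \<eta> \<le> exp (\<gamma> * d) * (B x' / \<eta>)" using smx assms(2) by (simp add: divide_right_mono)
      show "B x' / \<eta> \<le> exp (\<gamma> * d) * (B x / \<eta>)" using smx' assms(2) by (simp add: divide_right_mono)
      show "\<bar>f x - f x'\<bar> \<le> \<eta> * d * (B x / \<eta>)" using sh assms(2) by (simp add: mult.commute)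
    qed (use assms bp bp' in auto)
    thus ?thesis by (simp add: t_mechanism_def \<epsilon>_def d_def)
  qed
qed


end
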